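(* If there is no infinite $T$-rewrite sequence starting from any string of the canonical form $\lhd w\rhd$ with $w\in\{0_2,1_2,0_3,1_3,2_3\}^*$, then $T$ is terminating (on all strings over its alphabet).
   Context: A string rewriting system (SRS) $R$ over an alphabet $\Sigma$ is a set of pairs $\ell\to r$ of strings; it induces the rewrite relation $u\ell v\to_R urv$ ($u,v\in\Sigma^*$). $R$ is terminating if there is no infinite sequence $s_0\to_R s_1\to_R\cdots$. Alphabet: $\{0_2,1_2,0_3,1_3,2_3,\lhd,\rhd\}$. $T=D_T\cup A\cup B$ where $D_T=\{0_2\rhd\to\rhd,\ 1_2\rhd\to 2_3\rhd\}$; $A=\{0_20_3\to0_30_2,\ 0_21_3\to0_31_2,\ 0_22_3\to1_30_2,\ 1_20_3\to1_31_2,\ 1_21_3\to2_30_2,\ 1_22_3\to2_31_2\}$; $B=\{\lhd0_3\to\lhd1_2,\ \lhd1_3\to\lhd0_20_2,\ \lhd2_3\to\lhd0_21_2\}$. *)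

theory Defs
  imports Main
begin

text \<open>Alphabet: 0_2, 1_2, 0_3, 1_3, 2_3, left marker, right marker.\<close>
datatype sym = Z2 | O2 | Z3 | O3 | T3 | LM | RM

type_synonym srs = "(sym list \<times> sym list) set"

definition rstep :: "srs \<Rightarrow> sym list \<Rightarrow> sym list \<Rightarrow> bool" where
  "rstep R s t \<longleftrightarrow> (\<exists>u v l r. (l, r) \<in> R \<and> s = u @ l @ v \<and> t = u @ r @ v)"

definition infinite_seq_from :: "srs \<Rightarrow> sym list \<Rightarrow> bool" where
  "infinite_seq_from R s \<longleftrightarrow> (\<exists>f :: nat \<Rightarrow> sym list. f 0 = s \<and> (\<forall>i. rstep R (f i) (f (Suc i))))"

definition terminating :: "srs \<Rightarrow> bool" where
  "terminating R \<longleftrightarrow> \<not> (\<exists>f :: nat \<Rightarrow> sym list. \<forall>i. rstep R (f i) (f (Suc i)))"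

definition D_T :: srs where
  "D_T = {([Z2, RM], [RM]), ([O2, RM], [T3, RM])}"

definition A_rules :: srs where
  "A_rules = {([Z2, Z3], [Z3, Z2]), ([Z2, O3], [Z3, O2]), ([Z2, T3], [O3, Z2]),
              ([O2, Z3], [O3, O2]), ([O2, O3], [T3, Z2]), ([O2, T3], [T3, O2])}"

definition B_rules :: srs where
  "B_rules = {([LM, Z3], [LM, O2]), ([LM, O3], [LM, Z2, Z2]), ([LM, T3], [LM, Z2, O2])}"

definition T_sys :: srs where
  "T_sys = D_T \<union> A_rules \<union> B_rules"

definition inner :: "sym set" where
  "inner = {Z2, O2, Z3, O3, T3}"

end

theory Submission
  imports Defs
begin

lemma rule_shape:
  assumes "(l,r) \<in> T_sys"
  shows "(\<exists>l' r'. l = LM#l' \<and> r = LM#r' \<and> set l' \<subseteq> inner)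
       \<or> (\<exists>l' r'. l = l'@[RM] \<and> r = r'@[RM] \<and> set l' \<subseteq> inner \<and> l' \<noteq> [])
       \<or> (set l \<subseteq> inner \<and> l \<noteq> [])"
  using assms unfolding T_sys_def D_T_def A_rules_def B_rules_def
  by (elim UnE insertE emptyE; simp add: inner_def)

lemma rule_nonempty: "(l,r) \<in> T_sys \<Longrightarrow> l \<noteq> [] \<and> last l \<noteq> LM \<and> hd l \<noteq> RM"
  unfolding T_sys_def D_T_def A_rules_def B_rules_def by auto

lemma rstepI: "(l,r) \<in> R \<Longrightarrow> s = u@l@v \<Longrightarrow> t = u@r@v \<Longrightarrow> rstep R s t"
  unfolding rstep_def by blast

lemma ctx: "rstep R s t \<Longrightarrow> rstep R (a@s@b) (a@t@b)"
  unfolding rstep_def by (metis append.assoc)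

lemma inf_map:
  assumes "infinite_seq_from R s" "P s"
    and "\<And>s t. P s \<Longrightarrow> rstep R s t \<Longrightarrow> P t \<and> rstep R' (\<phi> s) (\<phi> t)"
  shows "infinite_seq_from R' (\<phi> s)"
proof -
  obtain f where f: "f 0 = s" "\<forall>i. rstep R (f i) (f (Suc i))"
    using assms(1) unfolding infinite_seq_from_def by blast
  have P: "P (f i)" for i by (induction i) (use f assms in auto)
  show ?thesis unfolding infinite_seq_from_def
    by (rule exI[of _ "\<lambda>i. \<phi> (f i)"]) (use f P assms(3) in auto)
qed

lemma sub:
  assumes st: "\<forall>i. g i = g (Suc i) \<or> R (g i) (g (Suc i))"
    and inf: "\<forall>i. \<exists>j\<ge>i. R (g j) (g (Suc j))"
  shows "\<exists>h. h 0 = g 0 \<and> (\<forall>i. R (h i) (h (Suc i)))"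
proof -
  define nxt where "nxt i = (LEAST j. i \<le> j \<and> R (g j) (g (Suc j)))" for i
  have n1: "i \<le> nxt i \<and> R (g (nxt i)) (g (Suc (nxt i)))" for i
    unfolding nxt_def by (rule LeastI_ex) (use inf in blast)
  have n2: "g k = g (Suc k)" if "i \<le> k" "k < nxt i" for i k
  proof -
    have "\<not> R (g k) (g (Suc k))" using that not_less_Least unfolding nxt_def by blast
    thus ?thesis using st by blast
  qed
  have n3: "i + d \<le> nxt i \<Longrightarrow> g (i + d) = g i" for i d
    by (induction d) (use n2 in \<open>auto\<close>, metis add_Suc_right le_add1 less_eq_Suc_le n2)
  have n4: "g (nxt i) = g i" for i using n3[of i "nxt i - i"] n1[of i] by simp
  define p where "p n = rec_nat (nxt 0) (\<lambda>_ q. nxt (Suc q)) n" for n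
  have p0: "p 0 = nxt 0" and pS: "p (Suc n) = nxt (Suc (p n))" for n unfolding p_def by auto
  show ?thesis
  proof (intro exI[of _ "\<lambda>n. g (p n)"] conjI allI)
    show "g (p 0) = g 0" using p0 n4 by simp
    fix i
    have "\<exists>j. p i = nxt j" by (cases i) (auto simp: p0 pS)
    then obtain j where j: "p i = nxt j" by blast
    show "R (g (p i)) (g (p (Suc i)))" using n1[of j] pS[of i] n4[of "Suc (p i)"] j by simp
  qed
qed

lemma strip_LM:
  assumes "rstep T_sys (x@[LM]) t"
  shows "\<exists>x'. t = x'@[LM] \<and> rstep T_sys x x'"
proof -
  obtain u v l r where lr: "(l,r) \<in> T_sys" and s: "x@[LM] = u@l@v" and t: "t = u@r@v"
    using assms unfolding rstep_def by blast
  have ne: "l \<noteq> []" "last l \<noteq> LM" using rule_nonempty[OF lr] by auto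
  have "v \<noteq> []"
  proof
    assume "v = []"
    then have "last (x@[LM]) = last l" using s ne by simp
    thus False using ne by simp
  qed
  then obtain v' where v': "v = v'@[LM]"
    using s by (metis append_butlast_last_id append_is_Nil_conv last_append last_snoc)
  show ?thesis
    by (rule exI[of _ "u@r@v'"]) (use s t v' lr in \<open>auto intro: rstepI\<close>)
qed

lemma strip_RM:
  assumes "rstep T_sys ([RM]@y) t"
  shows "\<exists>y'. t = [RM]@y' \<and> rstep T_sys y y'"
proof -
  obtain u v l r where lr: "(l,r) \<in> T_sys" and s: "[RM]@y = u@l@v" and t: "t = u@r@v"
    using assms unfolding rstep_def by blast
  have ne: "l \<noteq> []" "hd l \<noteq> RM" using rule_nonempty[OF lr] by auto
  have "u \<noteq> []"
  proof
    assume "u = []"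
    then have "hd ([RM]@y) = hd l" using s ne by simp
    thus False using ne by simp
  qed
  then obtain u' where u': "u = RM#u'"
    using s by (metis Cons_eq_append_conv append_Cons)
  show ?thesis
    by (rule exI[of _ "u'@r@v"]) (use s t u' lr in \<open>auto intro: rstepI\<close>)
qed

lemma step_split:
  assumes st: "rstep T_sys (x@[m]@y) t" and m: "m \<notin> inner"
  shows "\<exists>x' y'. t = x'@[m]@y' \<and> ((rstep T_sys (x@[m]) (x'@[m]) \<and> y' = y)
                 \<or> (x' = x \<and> rstep T_sys ([m]@y) ([m]@y')))"
proof -
  obtain u v l r where lr: "(l,r) \<in> T_sys" and s: "u@(l@v) = x@([m]@y)" and t: "t = u@r@v"
    using st unfolding rstep_def by (metis append.assoc)
  have sh: "(\<exists>l' r'. l = LM#l' \<and> r = LM#r' \<and> set l' \<subseteq> inner)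
       \<or> (\<exists>l' r'. l = l'@[RM] \<and> r = r'@[RM] \<and> set l' \<subseteq> inner \<and> l' \<noteq> [])
       \<or> (set l \<subseteq> inner \<and> l \<noteq> [])" using rule_shape[OF lr] .
  from s obtain us where
    "(u = x@us \<and> us@(l@v) = [m]@y) \<or> (u@us = x \<and> l@v = us@([m]@y))"
    unfolding append_eq_append_conv2 by blast
  then show ?thesis
  proof
    assume A: "u = x@us \<and> us@(l@v) = [m]@y"
    show ?thesis
    proof (cases us)
      case Nil
      with A have u: "u = x" and lv: "l@v = m#y" by auto
      from sh show ?thesis
      proof (elim disjE exE conjE)
        fix l' r' assume l: "l = LM#l'" and r: "r = LM#r'"
        have "m = LM" "y = l'@v" using lv l by auto
        then show ?thesis
          by (intro exI[of _ x] exI[of _ "r'@v"]) (use u t l r lr in \<open>auto intro: rstepI[where u="[]"]\<close>)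
      next
        fix l' r' assume l: "l = l'@[RM]" and i: "set l' \<subseteq> inner" "l' \<noteq> []"
        then have "hd l' = m" using lv by (cases l') auto
        then have "m \<in> set l'" using i by auto
        then show ?thesis using i m by auto
      next
        assume "set l \<subseteq> inner" "l \<noteq> []"
        then have "m \<in> inner" using lv by (cases l) auto
        then show ?thesis using m by auto
      qed
    next
      case (Cons a us')
      with A have u: "u = x@m#us'" and y: "y = us'@l@v" by auto
      show ?thesis
        by (intro exI[of _ x] exI[of _ "us'@r@v"]) (use u y t lr in \<open>auto intro: rstepI[where u="m#us'"]\<close>)
    qed
  next
    assume B: "u@us = x \<and> l@v = us@([m]@y)"
    then obtain zs where
      "(l = us@zs \<and> zs@v = [m]@y) \<or> (l@zs = us \<and> v = zs@([m]@y))"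
      unfolding append_eq_append_conv2 by blast
    then show ?thesis
    proof
      assume B1: "l = us@zs \<and> zs@v = [m]@y"
      show ?thesis
      proof (cases zs)
        case Nil
        with B B1 have x: "x = u@l" and v: "v = m#y" by auto
        show ?thesis
          by (intro exI[of _ "u@r"] exI[of _ y]) (use x v t lr in \<open>auto intro: rstepI[where u=u]\<close>)
      next
        case (Cons b zs')
        with B1 have l: "l = us@m#zs'" and y: "y = zs'@v" by auto
        from sh show ?thesis
        proof (elim disjE exE conjE)
          fix l' r' assume l2: "l = LM#l'" and r: "r = LM#r'" and i: "set l' \<subseteq> inner"
          have "us = []"
          proof (rule ccontr)
            assume "us \<noteq> []"
            then obtain c us'' where "us = c#us''" by (cases us) auto
            then have "m \<in> set l'" using l l2 by auto
            then show False using i m by auto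
          qed
          then have u: "u = x" "m = LM" "l' = zs'" using B l l2 by auto
          show ?thesis
            by (intro exI[of _ x] exI[of _ "r'@v"]) (use u y t l2 r lr in \<open>auto intro: rstepI[where u="[]"]\<close>)
        next
          fix l' r' assume l2: "l = l'@[RM]" and r: "r = r'@[RM]" and i: "set l' \<subseteq> inner"
          have "zs' = []"
          proof (rule ccontr)
            assume "zs' \<noteq> []"
            then obtain c zs'' where "zs' = zs''@[c]" by (cases zs' rule: rev_cases) auto
            then have "m \<in> set l'" using l l2 by auto
            then show False using i m by auto
          qed
          then have u: "x = u@us" "m = RM" "l' = us" "v = y" using B l l2 y by auto
          show ?thesis
            by (intro exI[of _ "u@r'"] exI[of _ y]) (use u t l2 r lr in \<open>auto intro: rstepI[where u=u and v="[]"]\<close>)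
        next
          assume "set l \<subseteq> inner"
          then show ?thesis using l m by auto
        qed
      qed
    next
      assume B2: "l@zs = us \<and> v = zs@([m]@y)"
      with B have x: "x = u@l@zs" by auto
      show ?thesis
        by (intro exI[of _ "u@r@zs"] exI[of _ y]) (use x B2 t lr in \<open>auto intro: rstepI[where u=u]\<close>)
    qed
  qed
qed

lemma split_inf:
  assumes inf: "infinite_seq_from T_sys (x@[m]@y)" and m: "m \<notin> inner"
  shows "infinite_seq_from T_sys (x@[m]) \<or> infinite_seq_from T_sys ([m]@y)"
proof -
  obtain f where f0: "f 0 = x@[m]@y" and fs: "\<forall>i. rstep T_sys (f i) (f (Suc i))"
    using inf unfolding infinite_seq_from_def by blast
  define Q where "Q = (\<lambda>(a::sym list,b::sym list) t (a',b'). t = a'@[m]@b' \<and>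
      ((rstep T_sys (a@[m]) (a'@[m]) \<and> b' = b) \<or> (a' = a \<and> rstep T_sys ([m]@b) ([m]@b'))))"
  define F where "F i = rec_nat (x,y) (\<lambda>i p. SOME p'. Q p (f (Suc i)) p') i" for i
  have F0: "F 0 = (x,y)" and FS: "F (Suc i) = (SOME p'. Q (F i) (f (Suc i)) p')" for i
    unfolding F_def by auto
  have inv: "f i = fst (F i)@[m]@snd (F i) \<and> Q (F i) (f (Suc i)) (F (Suc i))" for i
  proof (induction i)
    case 0
    obtain a' b' where "f (Suc 0) = a'@[m]@b' \<and> ((rstep T_sys (x@[m]) (a'@[m]) \<and> b' = y)
                 \<or> (a' = x \<and> rstep T_sys ([m]@y) ([m]@b')))"
      using step_split[OF _ m, of x y "f (Suc 0)"] fs f0 by metis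
    then have ex: "\<exists>p'. Q (F 0) (f (Suc 0)) p'"
      unfolding Q_def F0 by (intro exI[of _ "(a',b')"]) simp
    show ?case using someI_ex[OF ex] f0 F0 FS[of 0] by simp
  next
    case (Suc i)
    then have e: "f (Suc i) = fst (F (Suc i))@[m]@snd (F (Suc i))"
      unfolding Q_def by (cases "F i"; cases "F (Suc i)") simp
    obtain a' b' where "f (Suc (Suc i)) = a'@[m]@b' \<and> ((rstep T_sys (fst (F (Suc i))@[m]) (a'@[m]) \<and> b' = snd (F (Suc i)))
                 \<or> (a' = fst (F (Suc i)) \<and> rstep T_sys ([m]@snd (F (Suc i))) ([m]@b')))"
      using step_split[OF _ m, of "fst (F (Suc i))" "snd (F (Suc i))" "f (Suc (Suc i))"] fs e by metis
    then have ex: "\<exists>p'. Q (F (Suc i)) (f (Suc (Suc i))) p'"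
      unfolding Q_def by (intro exI[of _ "(a',b')"]) (cases "F (Suc i)", simp)
    show ?case using someI_ex[OF ex] e FS[of "Suc i"] by simp
  qed
  define X where "X i = fst (F i)" for i
  define Y where "Y i = snd (F i)" for i
  have step: "(rstep T_sys (X i@[m]) (X (Suc i)@[m]) \<and> Y (Suc i) = Y i)
      \<or> (X (Suc i) = X i \<and> rstep T_sys ([m]@Y i) ([m]@Y (Suc i)))" for i
    using inv[of i] unfolding Q_def X_def Y_def by (cases "F i"; cases "F (Suc i)") simp
  show ?thesis
  proof (cases "\<forall>i. \<exists>j\<ge>i. rstep T_sys (X j@[m]) (X (Suc j)@[m])")
    case True
    have "\<exists>h. h 0 = X 0@[m] \<and> (\<forall>i. rstep T_sys (h i) (h (Suc i)))"
      by (rule sub[where g="\<lambda>i. X i@[m]"]) (use True step in metis)+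
    then show ?thesis unfolding infinite_seq_from_def X_def F0 by auto
  next
    case False
    then obtain N where N: "\<forall>j\<ge>N. \<not> rstep T_sys (X j@[m]) (X (Suc j)@[m])" by blast
    have "\<exists>h. h 0 = [m]@Y 0 \<and> (\<forall>i. rstep T_sys (h i) (h (Suc i)))"
    proof (rule sub[where g="\<lambda>i. [m]@Y i"])
      show "\<forall>i. [m]@Y i = [m]@Y (Suc i) \<or> rstep T_sys ([m]@Y i) ([m]@Y (Suc i))"
        using step by metis
      show "\<forall>i. \<exists>j\<ge>i. rstep T_sys ([m]@Y j) ([m]@Y (Suc j))"
      proof
        fix i show "\<exists>j\<ge>i. rstep T_sys ([m]@Y j) ([m]@Y (Suc j))"
          using step[of "max i N"] N by (intro exI[of _ "max i N"]) auto
      qed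
    qed
    then show ?thesis unfolding infinite_seq_from_def Y_def F0 by auto
  qed
qed

lemma inf_ctx: "infinite_seq_from T_sys s \<Longrightarrow> infinite_seq_from T_sys (a@s@b)"
  using inf_map[where P="\<lambda>_. True" and \<phi>="\<lambda>s. a@s@b" and R=T_sys and R'=T_sys] ctx by blast

lemma inf_LM: "infinite_seq_from T_sys (x@[LM]) \<Longrightarrow> infinite_seq_from T_sys x"
  using inf_map[where P="\<lambda>s. \<exists>x. s = x@[LM]" and \<phi>=butlast and R=T_sys and R'=T_sys and s="x@[LM]"]
    strip_LM by fastforce

lemma inf_RM: "infinite_seq_from T_sys ([RM]@y) \<Longrightarrow> infinite_seq_from T_sys y"
  using inf_map[where P="\<lambda>s. \<exists>y. s = [RM]@y" and \<phi>=tl and R=T_sys and R'=T_sys and s="[RM]@y"]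
    strip_RM by fastforce

lemma not_inner: "m \<notin> inner \<Longrightarrow> m = LM \<or> m = RM"
  unfolding inner_def by (cases m) auto

theorem mainTheorem5:
  assumes "\<forall>w. set w \<subseteq> inner \<longrightarrow> \<not> infinite_seq_from T_sys ([LM] @ w @ [RM])"
  shows "terminating T_sys"
proof -
  have inn: "\<not> infinite_seq_from T_sys w" "\<not> infinite_seq_from T_sys (w@[RM])"
    "\<not> infinite_seq_from T_sys ([LM]@w)" if "set w \<subseteq> inner" for w
    using assms that inf_ctx[of w "[LM]" "[RM]"] inf_ctx[of "w@[RM]" "[LM]" "[]"]
      inf_ctx[of "[LM]@w" "[]" "[RM]"] by auto
  have tail: "\<not> infinite_seq_from T_sys ([m]@y)" if "set y \<subseteq> inner" "m \<notin> inner" for m y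
    using not_inner[OF that(2)] inn[OF that(1)] inf_RM[of y] by auto
  have main: "\<not> infinite_seq_from T_sys s \<and> \<not> infinite_seq_from T_sys (s@[RM])" for s
  proof (induction s rule: length_induct)
    case (1 s)
    show ?case
    proof (cases "set s \<subseteq> inner")
      case True then show ?thesis using inn by blast
    next
      case False
      then have "\<exists>a\<in>set s. a \<notin> inner" by blast
      then obtain x m y where s: "s = x@m#y" and m: "m \<notin> inner" and y: "\<forall>b\<in>set y. \<not> b \<notin> inner"
        using split_list_last_prop[of s "\<lambda>a. a \<notin> inner"] by blast
      have yi: "set y \<subseteq> inner" using y by blast
      have IH: "\<not> infinite_seq_from T_sys x \<and> \<not> infinite_seq_from T_sys (x@[RM])"
        using 1 s by simp
      have left: "\<not> infinite_seq_from T_sys (x@[m])"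
        using not_inner[OF m] IH inf_LM[of x] by auto
      have A: "\<not> infinite_seq_from T_sys s"
        using split_inf[of x m y, OF _ m] left tail[OF yi m] s by auto
      have r: "\<not> infinite_seq_from T_sys ([m]@(y@[RM]))"
        using not_inner[OF m] assms yi inn(2)[OF yi] inf_RM[of "y@[RM]"] by auto
      have B: "\<not> infinite_seq_from T_sys (s@[RM])"
        using split_inf[of x m "y@[RM]", OF _ m] left r s by auto
      show ?thesis using A B by blast
    qed
  qed
  show ?thesis unfolding terminating_def
  proof
    assume "\<exists>f. \<forall>i. rstep T_sys (f i) (f (Suc i))"
    then obtain f where "\<forall>i. rstep T_sys (f i) (f (Suc i))" by blast
    then have "infinite_seq_from T_sys (f 0)" unfolding infinite_seq_from_def by blast
    then show False using main by blast
  qed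
qed

end
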